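(* Let $n\ge3$, $0<1/b_n\le 1/c_n$, and let $V=(v_{ij})$ be a symmetric $n\times n$ matrix in $\mathcal L_n(1/b_n,1/c_n)$. Let $r\in\{1,\dots,n-1\}$ and let $V_{22}$ be the bottom-right $(n-r)\times(n-r)$ block of $V$. Let $S=\mathrm{diag}(1/v_{11},\dots,1/v_{nn})$ and $S_{22}=\mathrm{diag}(1/v_{r+1,r+1},\dots,1/v_{nn})$. Then $V$ and $V_{22}$ are invertible and $$\max\{\|V^{-1}-S\|_{\max},\ \|V_{22}^{-1}-S_{22}\|_{\max}\}\le\frac{2b_n^2}{c_n(n-1)^2}\Big(\frac{nb_n}{2(n-2)c_n}+\frac12\Big).$$
   Context: For $m,M>0$, $\mathcal L_n(m,M)$ is the class of $n\times n$ matrices $V=(v_{ij})$ with $v_{ii}=\sum_{j\ne i}v_{ij}$ for $i=1,\dots,n$ and $m\le v_{ij}\le M$ for all $i\ne j$. For a matrix $J$, $\|J\|_{\max}=\max_{i,j}|J_{ij}|$. *)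

theory Defs
  imports "Jordan_Normal_Form.Matrix"
begin

text \<open>Matrices are JNF matrices with 0-based indices 0..n-1 (paper: 1..n).\<close>

definition in_L :: "nat \<Rightarrow> real \<Rightarrow> real \<Rightarrow> real mat \<Rightarrow> bool" where
  "in_L n m M V \<longleftrightarrow> V \<in> carrier_mat n n
     \<and> (\<forall>i<n. V $$ (i,i) = (\<Sum>j\<in>{0..<n} - {i}. V $$ (i,j)))
     \<and> (\<forall>i<n. \<forall>j<n. i \<noteq> j \<longrightarrow> m \<le> V $$ (i,j) \<and> V $$ (i,j) \<le> M)"

definition max_norm :: "real mat \<Rightarrow> real" where
  "max_norm J = Max {\<bar>J $$ (i,j)\<bar> | i j. i < dim_row J \<and> j < dim_col J}"

definition mat_inv :: "real mat \<Rightarrow> real mat" where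
  "mat_inv A = (SOME B. inverts_mat A B \<and> inverts_mat B A)"

text \<open>Bottom-right block consisting of rows/columns r..n-1 (paper: r+1..n).\<close>
definition lower_block :: "nat \<Rightarrow> nat \<Rightarrow> real mat \<Rightarrow> real mat" where
  "lower_block n r V = mat (n - r) (n - r) (\<lambda>(i,j). V $$ (i + r, j + r))"

definition inv_diag :: "real mat \<Rightarrow> real mat" where
  "inv_diag A = mat (dim_row A) (dim_row A) (\<lambda>(i,j). if i = j then 1 / A $$ (i,i) else 0)"

end

theory Submission imports Defs "Jordan_Normal_Form.Determinant" begin

lemma quad_lower:
  fixes a :: "nat \<Rightarrow> nat \<Rightarrow> real" and x :: "nat \<Rightarrow> real" and m :: real
  assumes sym: "\<And>i j. i<k \<Longrightarrow> j<k \<Longrightarrow> a i j = a j i"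
  and off: "\<And>i j. i<k \<Longrightarrow> j<k \<Longrightarrow> i\<noteq>j \<Longrightarrow> m \<le> a i j"
  and diag: "\<And>i. i<k \<Longrightarrow> (\<Sum>j\<in>{0..<k}-{i}. a i j) + real (n-k) * m \<le> a i i"
  and kn: "k \<le> n" and m0: "0 \<le> m"
  shows "m * (real n - 2) * (\<Sum>i\<in>{0..<k}. x i ^ 2) \<le> (\<Sum>i\<in>{0..<k}. \<Sum>j\<in>{0..<k}. x i * a i j * x j)"
proof -
  define oo where "oo i j = (if i = j then 0 else a i j)" for i j
  let ?K = "{0..<k}"
  let ?X = "\<Sum>i\<in>?K. x i ^ 2"
  let ?s = "\<Sum>i\<in>?K. x i"
  have rem: "(\<Sum>j\<in>?K-{i}. a i j) = (\<Sum>j\<in>?K. oo i j)" if "i<k" for i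
  proof -
    have "(\<Sum>j\<in>?K. oo i j) = oo i i + (\<Sum>j\<in>?K-{i}. oo i j)" using that by (simp add: sum.remove)
    also have "(\<Sum>j\<in>?K-{i}. oo i j) = (\<Sum>j\<in>?K-{i}. a i j)" by (rule sum.cong) (auto simp: oo_def)
    finally show ?thesis by (simp add: oo_def)
  qed
  have row: "(\<Sum>j\<in>?K. x i * a i j * x j) = a i i * x i^2 + (\<Sum>j\<in>?K. oo i j * x i * x j)" if "i<k" for i
  proof -
    have "(\<Sum>j\<in>?K. x i * a i j * x j) = x i * a i i * x i + (\<Sum>j\<in>?K-{i}. x i * a i j * x j)" using that by (simp add: sum.remove)
    moreover have "(\<Sum>j\<in>?K. oo i j * x i * x j) = oo i i * x i * x i + (\<Sum>j\<in>?K-{i}. oo i j * x i * x j)" using that by (simp add: sum.remove)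
    moreover have "(\<Sum>j\<in>?K-{i}. x i * a i j * x j) = (\<Sum>j\<in>?K-{i}. oo i j * x i * x j)" by (rule sum.cong) (auto simp: oo_def)
    ultimately show ?thesis by (simp add: oo_def power2_eq_square)
  qed
  have swap: "(\<Sum>i\<in>?K. \<Sum>j\<in>?K. oo i j * x i ^2) = (\<Sum>i\<in>?K. \<Sum>j\<in>?K. oo i j * x j ^2)"
  proof -
    have "(\<Sum>i\<in>?K. \<Sum>j\<in>?K. oo i j * x i ^2) = (\<Sum>j\<in>?K. \<Sum>i\<in>?K. oo i j * x i ^2)" by (rule sum.swap)
    also have "\<dots> = (\<Sum>j\<in>?K. \<Sum>i\<in>?K. oo j i * x i ^2)" by (intro sum.cong refl) (auto simp: oo_def sym)
    finally show ?thesis .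
  qed
  have exp: "(\<Sum>i\<in>?K. \<Sum>j\<in>?K. oo i j * (x i + x j)^2) = (\<Sum>i\<in>?K. \<Sum>j\<in>?K. oo i j * x i^2) + 2*(\<Sum>i\<in>?K. \<Sum>j\<in>?K. oo i j * x i * x j) + (\<Sum>i\<in>?K. \<Sum>j\<in>?K. oo i j * x j^2)"
    by (simp add: power2_sum algebra_simps sum.distrib sum_distrib_left)
  have half: "(\<Sum>i\<in>?K. \<Sum>j\<in>?K. oo i j * x i^2) + (\<Sum>i\<in>?K. \<Sum>j\<in>?K. oo i j * x i * x j) = (\<Sum>i\<in>?K. \<Sum>j\<in>?K. oo i j * (x i + x j)^2) / 2"
    using exp swap by simp
  have lower: "(\<Sum>i\<in>?K. \<Sum>j\<in>?K. (if i=j then 0 else m) * (x i + x j)^2) \<le> (\<Sum>i\<in>?K. \<Sum>j\<in>?K. oo i j * (x i + x j)^2)"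
    by (intro sum_mono mult_right_mono) (auto simp: oo_def off)
  have pr: "(\<Sum>j\<in>?K. (if i=j then 0 else m) * (x i + x j)^2) = m * (\<Sum>j\<in>?K. (x i + x j)^2) - m * (2 * x i)^2" if "i<k" for i
  proof -
    have "(\<Sum>j\<in>?K. (if i=j then 0 else m) * (x i + x j)^2) = (\<Sum>j\<in>?K-{i}. (if i=j then 0 else m) * (x i + x j)^2)"
      using that by (simp add: sum.remove)
    also have "\<dots> = (\<Sum>j\<in>?K-{i}. m * (x i + x j)^2)" by (rule sum.cong) auto
    also have "\<dots> = m * (\<Sum>j\<in>?K-{i}. (x i + x j)^2)" by (simp add: sum_distrib_left)
    also have "(\<Sum>j\<in>?K. (x i + x j)^2) = (x i + x i)^2 + (\<Sum>j\<in>?K-{i}. (x i + x j)^2)" using that by (simp add: sum.remove)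
    ultimately show ?thesis by (simp add: algebra_simps)
  qed
  have pr2: "(\<Sum>i\<in>?K. \<Sum>j\<in>?K. (if i=j then 0 else m) * (x i + x j)^2) = m * (\<Sum>i\<in>?K. \<Sum>j\<in>?K. (x i + x j)^2) - 4 * m * ?X"
  proof -
    have "(\<Sum>i\<in>?K. \<Sum>j\<in>?K. (if i=j then 0 else m) * (x i + x j)^2) = (\<Sum>i\<in>?K. m * (\<Sum>j\<in>?K. (x i + x j)^2) - 4 * m * x i ^2)"
      by (rule sum.cong) (auto simp: pr power_mult_distrib)
    then show ?thesis by (simp add: sum_subtractf sum_distrib_left)
  qed
  have full: "(\<Sum>i\<in>?K. \<Sum>j\<in>?K. (x i + x j)^2) = 2 * real k * ?X + 2 * ?s^2"
  proof -
    have e: "(\<Sum>i\<in>?K. \<Sum>j\<in>?K. (x i + x j)^2) = (\<Sum>i\<in>?K. \<Sum>j\<in>?K. x i^2) + (\<Sum>i\<in>?K. \<Sum>j\<in>?K. x j^2) + 2 * (\<Sum>i\<in>?K. \<Sum>j\<in>?K. x i * x j)"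
      by (simp add: power2_sum sum.distrib sum_distrib_left mult.assoc)
    have e1: "(\<Sum>i\<in>?K. \<Sum>j\<in>?K. x i^2) = real k * ?X" by (simp add: sum_distrib_left)
    have e2: "(\<Sum>i\<in>?K. \<Sum>j\<in>?K. x j^2) = real k * ?X" by simp
    have e3: "(\<Sum>i\<in>?K. \<Sum>j\<in>?K. x i * x j) = ?s^2" by (simp add: sum_product power2_eq_square)
    show ?thesis using e e1 e2 e3 by simp
  qed
  have S: "(\<Sum>i\<in>?K. \<Sum>j\<in>?K. x i * a i j * x j) = (\<Sum>i\<in>?K. a i i * x i^2) + (\<Sum>i\<in>?K. \<Sum>j\<in>?K. oo i j * x i * x j)"
    by (simp add: row sum.distrib)
  have D: "(\<Sum>i\<in>?K. a i i * x i^2) \<ge> (\<Sum>i\<in>?K. \<Sum>j\<in>?K. oo i j * x i^2) + real (n-k) * m * ?X"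
  proof -
    have "(\<Sum>i\<in>?K. a i i * x i^2) \<ge> (\<Sum>i\<in>?K. ((\<Sum>j\<in>?K. oo i j) + real (n-k) * m) * x i^2)"
      by (intro sum_mono mult_right_mono) (auto simp: diag rem[symmetric])
    also have "(\<Sum>i\<in>?K. ((\<Sum>j\<in>?K. oo i j) + real (n-k) * m) * x i^2) = (\<Sum>i\<in>?K. \<Sum>j\<in>?K. oo i j * x i^2) + real (n-k) * m * ?X"
      by (simp add: algebra_simps sum.distrib sum_distrib_left sum_distrib_right)
    finally show ?thesis .
  qed
  have nk: "real (n-k) = real n - real k" using kn by simp
  define P where "P = (\<Sum>i\<in>?K. \<Sum>j\<in>?K. oo i j * x i^2)"
  define Q where "Q = (\<Sum>i\<in>?K. \<Sum>j\<in>?K. oo i j * x i * x j)"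
  define R where "R = (\<Sum>i\<in>?K. \<Sum>j\<in>?K. oo i j * (x i + x j)^2)"
  define T where "T = (\<Sum>i\<in>?K. \<Sum>j\<in>?K. (x i + x j)^2)"
  define L where "L = (\<Sum>i\<in>?K. \<Sum>j\<in>?K. (if i=j then 0 else m) * (x i + x j)^2)"
  have "(\<Sum>i\<in>?K. \<Sum>j\<in>?K. x i * a i j * x j) \<ge> real (n-k) * m * ?X + R / 2"
    using S D half unfolding P_def Q_def R_def by linarith
  moreover have "R / 2 \<ge> (m * T - 4 * m * ?X) / 2"
    unfolding R_def T_def using divide_right_mono[OF lower, of 2] pr2 by simp
  moreover have "(m * T - 4 * m * ?X) / 2 = m * real k * ?X + m * ?s^2 - 2 * m * ?X"
    unfolding T_def full by (simp add: field_simps)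
  moreover have "real (n-k) * m * ?X + (m * real k * ?X + m * ?s^2 - 2 * m * ?X) \<ge> m * (real n - 2) * ?X"
    using m0 nk by (simp add: algebra_simps)
  ultimately show ?thesis by linarith
qed
lemma abs_half:
  fixes p q u v w z :: real
  shows "0 \<le> p \<Longrightarrow> 0 \<le> q \<Longrightarrow> p = u + v + w + z \<Longrightarrow> q = u - v - w + z \<Longrightarrow> v = w \<Longrightarrow> \<bar>v\<bar> \<le> (u + z) / 2"
  by (simp add: abs_le_iff; linarith)

lemma half_le: fixes a x y B :: real shows "\<bar>a\<bar> \<le> (x+y)/2 \<Longrightarrow> x \<le> B \<Longrightarrow> y \<le> B \<Longrightarrow> \<bar>a\<bar> \<le> B"
  by (simp add: abs_le_iff; linarith)

lemma abs_sub_le: fixes a b x y :: real shows "\<bar>a\<bar> \<le> x \<Longrightarrow> \<bar>b\<bar> \<le> y \<Longrightarrow> \<bar>a - b\<bar> \<le> y + x"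
  by (simp add: abs_le_iff; linarith)

lemma inv_bound:
  fixes a g :: "nat \<Rightarrow> nat \<Rightarrow> real" and m M :: real
  assumes sym: "\<And>i j. i<k \<Longrightarrow> j<k \<Longrightarrow> a i j = a j i"
  and off: "\<And>i j. i<k \<Longrightarrow> j<k \<Longrightarrow> i\<noteq>j \<Longrightarrow> m \<le> a i j \<and> a i j \<le> M"
  and diag: "\<And>i. i<k \<Longrightarrow> (\<Sum>j\<in>{0..<k}-{i}. a i j) + real (n-k) * m \<le> a i i"
  and kn: "k \<le> n" and n3: "3 \<le> n" and m0: "0 < m" and mM: "m \<le> M"
  and AG: "\<And>i j. i<k \<Longrightarrow> j<k \<Longrightarrow> (\<Sum>l\<in>{0..<k}. a i l * g l j) = (if i=j then 1 else 0)"
  and GA: "\<And>i j. i<k \<Longrightarrow> j<k \<Longrightarrow> (\<Sum>l\<in>{0..<k}. g i l * a l j) = (if i=j then 1 else 0)"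
  and ij: "i<k" "j<k"
  shows "\<bar>g i j - (if i=j then 1 / a i i else 0)\<bar> \<le> (M + real n * M^2 / (m * (real n - 2))) / ((real n - 1) * m)^2"
proof -
  let ?K = "{0..<k}"
  define oo where "oo i j = (if i = j then 0 else a i j)" for i j
  define c where "c = m * (real n - 2)"
  have c0: "c > 0" unfolding c_def using m0 n3 by simp
  have ql: "c * (\<Sum>i\<in>?K. x i ^ 2) \<le> (\<Sum>i\<in>?K. \<Sum>j\<in>?K. x i * a i j * x j)" for x
    unfolding c_def by (rule quad_lower[OF sym _ diag kn]) (use off m0 in auto)
  have dlow: "(real n - 1) * m \<le> a i i" if "i<k" for i
  proof -
    have "of_nat (card (?K-{i})) * m \<le> (\<Sum>j\<in>?K-{i}. a i j)"
      by (rule sum_bounded_below) (use off that in auto)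
    moreover have "card (?K-{i}) = k - 1" using that by simp
    moreover have "real (k-1) + real (n-k) = real n - 1" using that kn by (simp add: of_nat_diff)
    ultimately show ?thesis using diag[OF that] by (simp add: algebra_simps)
  qed
  have n1: "real n - 1 > 0" using n3 by simp
  have dpos: "a i i > 0" if "i<k" for i using dlow[OF that] mult_pos_pos[OF n1 m0] by linarith
  have oo_sym: "oo i j = oo j i" if "i<k" "j<k" for i j using sym that by (simp add: oo_def)
  have oo_rng: "0 \<le> oo i j \<and> oo i j \<le> M" if "i<k" "j<k" for i j using off[OF that] m0 mM by (auto simp: oo_def)
  have E2: "a i i * g i j + (\<Sum>l\<in>?K. oo i l * g l j) = (if i=j then 1 else 0)" if "i<k" "j<k" for i j
  proof -
    have "(\<Sum>l\<in>?K. a i l * g l j) = a i i * g i j + (\<Sum>l\<in>?K-{i}. a i l * g l j)" using that by (simp add: sum.remove)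
    moreover have "(\<Sum>l\<in>?K. oo i l * g l j) = oo i i * g i j + (\<Sum>l\<in>?K-{i}. oo i l * g l j)" using that by (simp add: sum.remove)
    moreover have "(\<Sum>l\<in>?K-{i}. oo i l * g l j) = (\<Sum>l\<in>?K-{i}. a i l * g l j)" by (rule sum.cong) (auto simp: oo_def)
    ultimately show ?thesis using AG[OF that] by (simp add: oo_def)
  qed
  have E1: "g i j * a j j + (\<Sum>l\<in>?K. g i l * oo l j) = (if i=j then 1 else 0)" if "i<k" "j<k" for i j
  proof -
    have "(\<Sum>l\<in>?K. g i l * a l j) = g i j * a j j + (\<Sum>l\<in>?K-{j}. g i l * a l j)" using that by (simp add: sum.remove[of "{0..<k}" j])
    moreover have "(\<Sum>l\<in>?K. g i l * oo l j) = g i j * oo j j + (\<Sum>l\<in>?K-{j}. g i l * oo l j)" using that by (simp add: sum.remove[of "{0..<k}" j])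
    moreover have "(\<Sum>l\<in>?K-{j}. g i l * oo l j) = (\<Sum>l\<in>?K-{j}. g i l * a l j)" by (rule sum.cong) (auto simp: oo_def)
    ultimately show ?thesis using GA[OF that] by (simp add: oo_def)
  qed
  define Q where "Q = (\<Sum>l\<in>?K. \<Sum>p\<in>?K. oo i l * g l p * oo p j)"
  have W: "g i j - (if i=j then 1 / a i i else 0) = (Q - oo i j) / (a i i * a j j)"
  proof -
    have w1: "g i j - (if i=j then 1 / a i i else 0) = - (\<Sum>l\<in>?K. oo i l * g l j) / a i i"
      using E2[OF ij] dpos[OF ij(1)] by (auto simp: field_simps)
    have gl: "g l j = ((if l=j then 1 else 0) - (\<Sum>p\<in>?K. g l p * oo p j)) / a j j" if "l<k" for l
      using E1[OF that ij(2)] dpos[OF ij(2)] by (simp add: field_simps)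
    have "(\<Sum>l\<in>?K. oo i l * g l j) = (\<Sum>l\<in>?K. oo i l * (((if l=j then 1 else 0) - (\<Sum>p\<in>?K. g l p * oo p j)) / a j j))"
      by (rule sum.cong) (auto simp: gl)
    also have "\<dots> = (\<Sum>l\<in>?K. (oo i l * (if l=j then 1 else 0) - (\<Sum>p\<in>?K. oo i l * g l p * oo p j)) / a j j)"
      by (rule sum.cong) (simp_all add: right_diff_distrib sum_distrib_left mult.assoc)
    also have "\<dots> = (\<Sum>l\<in>?K. oo i l * (if l=j then 1 else 0) - (\<Sum>p\<in>?K. oo i l * g l p * oo p j)) / a j j"
      by (simp add: sum_divide_distrib)
    also have "(\<Sum>l\<in>?K. oo i l * (if l=j then 1 else 0) - (\<Sum>p\<in>?K. oo i l * g l p * oo p j)) = (\<Sum>l\<in>?K. oo i l * (if l=j then 1 else 0)) - Q"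
      by (simp add: Q_def sum_subtractf)
    also have "(\<Sum>l\<in>?K. oo i l * (if l=j then 1 else 0)) = (\<Sum>l\<in>?K. if l = j then oo i l else 0)"
      by (rule sum.cong) auto
    also have "\<dots> = oo i j" using ij by simp
    finally have sg: "(\<Sum>l\<in>?K. oo i l * g l j) = (oo i j - Q) / a j j" .
    have "- ((oo i j - Q) / a j j) / a i i = (Q - oo i j) / (a i i * a j j)" by (metis divide_divide_eq_left minus_diff_eq minus_divide_left mult.commute)
    then show ?thesis using w1 sg by simp
  qed
  define q where "q j l = (\<Sum>p\<in>?K. g l p * oo p j)" for j l
  define F where "F x y = (\<Sum>l\<in>?K. \<Sum>t\<in>?K. x l * a l t * y t)" for x y
  have Aq: "(\<Sum>t\<in>?K. a l t * q j t) = oo l j" if "l<k" "j<k" for l j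
  proof -
    have "(\<Sum>t\<in>?K. a l t * q j t) = (\<Sum>t\<in>?K. \<Sum>p\<in>?K. a l t * g t p * oo p j)"
      unfolding q_def by (simp add: sum_distrib_left mult.assoc)
    also have "\<dots> = (\<Sum>p\<in>?K. \<Sum>t\<in>?K. a l t * g t p * oo p j)" by (rule sum.swap)
    also have "\<dots> = (\<Sum>p\<in>?K. (\<Sum>t\<in>?K. a l t * g t p) * oo p j)" by (simp add: sum_distrib_right)
    also have "\<dots> = (\<Sum>p\<in>?K. if p = l then oo p j else 0)" by (rule sum.cong) (auto simp: AG that)
    also have "\<dots> = oo l j" using that by simp
    finally show ?thesis .
  qed
  have Fqq: "F (q j) (q i') = (\<Sum>l\<in>?K. q j l * oo l i')" if "i'<k" for i' j
    unfolding F_def by (rule sum.cong) (auto simp: sum_distrib_left[symmetric] mult.assoc Aq that)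
  have QF: "Q = F (q j) (q i)"
  proof -
    have "Q = (\<Sum>l\<in>?K. oo i l * q j l)" unfolding Q_def q_def by (simp add: sum_distrib_left mult.assoc)
    also have "\<dots> = (\<Sum>l\<in>?K. q j l * oo l i)" by (rule sum.cong) (auto simp: oo_sym ij)
    finally show ?thesis using Fqq[OF ij(1)] by simp
  qed
  have Fsym: "F x y = F y x" for x y
  proof -
    have "F x y = (\<Sum>t\<in>?K. \<Sum>l\<in>?K. x l * a l t * y t)" unfolding F_def by (rule sum.swap)
    also have "\<dots> = F y x" unfolding F_def by (intro sum.cong refl) (auto simp: sym)
    finally show ?thesis .
  qed
  have Fpos: "0 \<le> F x x" for x
  proof -
    have "0 \<le> c * (\<Sum>i\<in>?K. x i ^ 2)" using c0 by (simp add: sum_nonneg)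
    with ql[of x] show ?thesis unfolding F_def by linarith
  qed
  have Fplus: "F (\<lambda>l. x l + y l) (\<lambda>l. x l + y l) = F x x + F x y + F y x + F y y" for x y
    unfolding F_def by (simp add: algebra_simps sum.distrib)
  have Fminus: "F (\<lambda>l. x l - y l) (\<lambda>l. x l - y l) = F x x - F x y - F y x + F y y" for x y
    unfolding F_def by (simp add: algebra_simps sum.distrib sum_subtractf)
  have Fcs: "\<bar>F x y\<bar> \<le> (F x x + F y y) / 2" for x y
    using Fpos[of "\<lambda>l. x l + y l"] Fpos[of "\<lambda>l. x l - y l"] Fplus[of x y] Fminus[of x y] Fsym[of x y]
    by (rule abs_half)
  have Fbd: "F (q j) (q j) \<le> real n * M^2 / c" if "j<k" for j
  proof -
    let ?p = "q j"
    have "F ?p ?p = (\<Sum>l\<in>?K. ?p l * oo l j)" using Fqq[OF that] .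
    also have "\<dots> \<le> (\<Sum>l\<in>?K. (oo l j)^2 / (2*c) + c * (?p l)^2 / 2)"
    proof (rule sum_mono)
      fix l
      have "0 \<le> (oo l j - c * ?p l)^2" by simp
      then have "2 * c * (?p l * oo l j) \<le> (oo l j)^2 + c^2 * (?p l)^2" by (simp add: power2_eq_square algebra_simps)
      then show "?p l * oo l j \<le> (oo l j)^2 / (2*c) + c * (?p l)^2 / 2"
        using c0 by (simp add: field_simps power2_eq_square)
    qed
    also have "\<dots> = (\<Sum>l\<in>?K. (oo l j)^2) / (2*c) + c * (\<Sum>l\<in>?K. (?p l)^2) / 2"
      by (simp add: sum.distrib sum_divide_distrib sum_distrib_left)
    also have "\<dots> \<le> (\<Sum>l\<in>?K. (oo l j)^2) / (2*c) + F ?p ?p / 2"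
      using ql[of ?p] unfolding F_def by simp
    finally have "F ?p ?p \<le> (\<Sum>l\<in>?K. (oo l j)^2) / c" using c0 by (simp add: field_simps)
    also have "(\<Sum>l\<in>?K. (oo l j)^2) \<le> (\<Sum>l\<in>?K. M^2)"
      by (rule sum_mono) (use oo_rng that in \<open>auto intro: power_mono\<close>)
    also have "(\<Sum>l\<in>?K. M^2) \<le> real n * M^2" using kn by (simp add: mult_right_mono)
    finally show ?thesis using c0 by (simp add: divide_right_mono)
  qed
  have "\<bar>F (q j) (q i)\<bar> \<le> real n * M^2 / c"
    using half_le[OF Fcs[of "q j" "q i"] Fbd[OF ij(2)] Fbd[OF ij(1)]] .
  then have Qb: "\<bar>Q\<bar> \<le> real n * M^2 / c" using QF by simp
  have ob: "\<bar>oo i j\<bar> \<le> M" using oo_rng[OF ij] by simp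
  have num: "\<bar>Q - oo i j\<bar> \<le> M + real n * M^2 / c" using abs_sub_le[OF Qb ob] .
  have den: "((real n - 1) * m)^2 \<le> a i i * a j j"
    using mult_mono[OF dlow[OF ij(1)] dlow[OF ij(2)]] mult_pos_pos[OF n1 m0] dpos[OF ij(1)] by (simp add: power2_eq_square)
  have dp: "0 < ((real n - 1) * m)^2" using mult_pos_pos[OF n1 m0] by (rule zero_less_power)
  have "\<bar>(Q - oo i j) / (a i i * a j j)\<bar> = \<bar>Q - oo i j\<bar> / (a i i * a j j)"
    using mult_pos_pos[OF dpos[OF ij(1)] dpos[OF ij(2)]] by (simp add: abs_divide)
  also have "\<dots> \<le> (M + real n * M^2 / c) / ((real n - 1) * m)^2"
    by (rule frac_le[OF order_trans[OF abs_ge_zero num] num dp den])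
  finally show ?thesis unfolding W c_def .
qed

lemma max_norm_le:
  fixes J :: "real mat"
  assumes "dim_row J = k" "dim_col J = k" "1 \<le> k"
    and "\<And>i j. i<k \<Longrightarrow> j<k \<Longrightarrow> \<bar>J $$ (i,j)\<bar> \<le> \<beta>"
  shows "max_norm J \<le> \<beta>"
proof -
  have eq: "{\<bar>J $$ (i,j)\<bar> | i j. i < dim_row J \<and> j < dim_col J} = (\<lambda>(i,j). \<bar>J $$ (i,j)\<bar>) ` ({0..<k} \<times> {0..<k})"
    using assms(1,2) by (auto; blast)
  have ne: "(\<lambda>(i,j). \<bar>J $$ (i,j)\<bar>) ` ({0..<k} \<times> {0..<k}) \<noteq> {}" using assms(3) by auto
  show ?thesis unfolding max_norm_def eq
    using ne assms(4) by (subst Max_le_iff) auto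
qed

lemma main_gen:
  fixes A :: "real mat" and m M :: real
  assumes A: "A \<in> carrier_mat k k" and k1: "1 \<le> k" and kn: "k \<le> n" and n3: "3 \<le> n"
  and m0: "0 < m" and mM: "m \<le> M"
  and sym: "\<And>i j. i<k \<Longrightarrow> j<k \<Longrightarrow> A $$ (i,j) = A $$ (j,i)"
  and off: "\<And>i j. i<k \<Longrightarrow> j<k \<Longrightarrow> i\<noteq>j \<Longrightarrow> m \<le> A $$ (i,j) \<and> A $$ (i,j) \<le> M"
  and diag: "\<And>i. i<k \<Longrightarrow> (\<Sum>j\<in>{0..<k}-{i}. A $$ (i,j)) + real (n-k) * m \<le> A $$ (i,i)"
  shows "invertible_mat A \<and> max_norm (mat_inv A - inv_diag A) \<le> (M + real n * M^2 / (m * (real n - 2))) / ((real n - 1) * m)^2"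
proof -
  let ?a = "\<lambda>i j. A $$ (i,j)"
  have "det A \<noteq> 0"
  proof
    assume "det A = 0"
    then obtain v where v: "v \<in> carrier_vec k" "v \<noteq> 0\<^sub>v k" "A *\<^sub>v v = 0\<^sub>v k"
      using det_0_iff_vec_prod_zero[OF A] by auto
    have "m * (real n - 2) * (\<Sum>i\<in>{0..<k}. (v $ i) ^ 2) \<le> (\<Sum>i\<in>{0..<k}. \<Sum>j\<in>{0..<k}. v $ i * ?a i j * v $ j)"
      by (rule quad_lower[OF sym _ diag kn]) (use off m0 in auto)
    also have "\<dots> = (\<Sum>i\<in>{0..<k}. v $ i * (A *\<^sub>v v) $ i)"
    proof (rule sum.cong[OF refl])
      fix i assume i: "i \<in> {0..<k}"
      have "(A *\<^sub>v v) $ i = (\<Sum>j\<in>{0..<k}. ?a i j * v $ j)"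
        using A v(1) i by (simp add: scalar_prod_def)
      then show "(\<Sum>j\<in>{0..<k}. v $ i * ?a i j * v $ j) = v $ i * (A *\<^sub>v v) $ i"
        by (simp add: sum_distrib_left mult.assoc)
    qed
    also have "\<dots> = 0" using v(3) by simp
    finally have le0: "m * (real n - 2) * (\<Sum>i\<in>{0..<k}. (v $ i) ^ 2) \<le> 0" .
    have "m * (real n - 2) > 0" using m0 n3 by simp
    then have "(\<Sum>i\<in>{0..<k}. (v $ i) ^ 2) \<le> 0" using le0 mult_le_cancel_left_pos[of "m * (real n - 2)" "\<Sum>i\<in>{0..<k}. (v $ i) ^ 2" 0] by simp
    then have "\<forall>i\<in>{0..<k}. (v $ i)^2 = 0"
      using sum_nonneg_eq_0_iff[of "{0..<k}" "\<lambda>i. (v $ i)^2"] by (simp add: antisym sum_nonneg)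
    then have "v = 0\<^sub>v k" using v(1) by (intro eq_vecI) auto
    with v(2) show False by simp
  qed
  from det_non_zero_imp_unit[OF A this, of "()"]
  obtain B where B: "B \<in> carrier_mat k k" "B * A = 1\<^sub>m k" "A * B = 1\<^sub>m k"
    unfolding Units_def ring_mat_def by auto
  have inv: "invertible_mat A" unfolding invertible_mat_def inverts_mat_def
    using A B by (intro conjI exI[of _ B]) auto
  define G where "G = mat_inv A"
  have "\<exists>B. inverts_mat A B \<and> inverts_mat B A" using inv unfolding invertible_mat_def by auto
  then have GG: "inverts_mat A G \<and> inverts_mat G A" unfolding G_def mat_inv_def by (rule someI_ex)
  have AG: "A * G = 1\<^sub>m k" using GG A unfolding inverts_mat_def by auto
  have GA: "G * A = 1\<^sub>m (dim_row G)" using GG unfolding inverts_mat_def by auto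
  have dcG: "dim_col G = k" using arg_cong[OF AG, of dim_col] by simp
  have drG: "dim_row G = k" using arg_cong[OF GA, of dim_col] A by simp
  have AGe: "(\<Sum>l\<in>{0..<k}. ?a i l * G $$ (l,j)) = (if i=j then 1 else 0)" if "i<k" "j<k" for i j
  proof -
    have "(A * G) $$ (i,j) = (\<Sum>l\<in>{0..<k}. ?a i l * G $$ (l,j))"
      using that A dcG drG by (simp add: scalar_prod_def)
    then show ?thesis using AG that by simp
  qed
  have GAe: "(\<Sum>l\<in>{0..<k}. G $$ (i,l) * ?a l j) = (if i=j then 1 else 0)" if "i<k" "j<k" for i j
  proof -
    have "(G * A) $$ (i,j) = (\<Sum>l\<in>{0..<k}. G $$ (i,l) * ?a l j)"
      using that A dcG drG by (simp add: scalar_prod_def)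
    then show ?thesis using GA that drG by simp
  qed
  have "max_norm (G - inv_diag A) \<le> (M + real n * M^2 / (m * (real n - 2))) / ((real n - 1) * m)^2"
  proof (rule max_norm_le[OF _ _ k1])
    show "dim_row (G - inv_diag A) = k" "dim_col (G - inv_diag A) = k" using A by (auto simp: inv_diag_def)
    fix i j assume ij: "i<k" "j<k"
    have "(G - inv_diag A) $$ (i,j) = G $$ (i,j) - (if i=j then 1 / ?a i i else 0)"
      using ij A by (simp add: inv_diag_def)
    moreover have "\<bar>G $$ (i,j) - (if i=j then 1 / ?a i i else 0)\<bar> \<le> (M + real n * M^2 / (m * (real n - 2))) / ((real n - 1) * m)^2"
      by (rule inv_bound[where g = "\<lambda>i j. G $$ (i,j)", OF sym off diag kn n3 m0 mM AGe GAe ij])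
    ultimately show "\<bar>(G - inv_diag A) $$ (i,j)\<bar> \<le> (M + real n * M^2 / (m * (real n - 2))) / ((real n - 1) * m)^2" by simp
  qed
  then show ?thesis using inv G_def by simp
qed

theorem lemma2:
  fixes n r :: nat and b c :: real and V :: "real mat"
  assumes "n \<ge> 3"
    and "0 < 1 / b" and "1 / b \<le> 1 / c"
    and "in_L n (1 / b) (1 / c) V"
    and "transpose_mat V = V"
    and "1 \<le> r" and "r \<le> n - 1"
  shows "invertible_mat V \<and> invertible_mat (lower_block n r V) \<and>
    max (max_norm (mat_inv V - inv_diag V))
        (max_norm (mat_inv (lower_block n r V) - inv_diag (lower_block n r V)))
      \<le> 2 * b^2 / (c * (real n - 1)^2) * (real n * b / (2 * (real n - 2) * c) + 1 / 2)"
proof -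
  define m where "m = 1 / b"
  define M where "M = 1 / c"
  have n3: "3 \<le> n" using assms(1) .
  have m0: "0 < m" using assms(2) m_def by simp
  have mM: "m \<le> M" using assms(3) m_def M_def by simp
  have b0: "b > 0" using assms(2) by simp
  have "0 < 1 / c" using assms(2,3) by linarith
  then have c0: "c > 0" by simp
  have V: "V \<in> carrier_mat n n"
    and Vd: "\<And>i. i<n \<Longrightarrow> V $$ (i,i) = (\<Sum>j\<in>{0..<n} - {i}. V $$ (i,j))"
    and Vo: "\<And>i j. i<n \<Longrightarrow> j<n \<Longrightarrow> i \<noteq> j \<Longrightarrow> m \<le> V $$ (i,j) \<and> V $$ (i,j) \<le> M"
    using assms(4) unfolding in_L_def m_def M_def by auto
  have Vs: "V $$ (i,j) = V $$ (j,i)" if "i<n" "j<n" for i j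
  proof -
    have "transpose_mat V $$ (i,j) = V $$ (j,i)" using V that by simp
    then show ?thesis using assms(5) by simp
  qed
  define \<beta> where "\<beta> = (M + real n * M^2 / (m * (real n - 2))) / ((real n - 1) * m)^2"
  have R1: "invertible_mat V \<and> max_norm (mat_inv V - inv_diag V) \<le> \<beta>"
    unfolding \<beta>_def
    by (rule main_gen[OF V _ order_refl n3 m0 mM Vs Vo]) (use n3 Vd in auto)
  define k where "k = n - r"
  define L where "L = lower_block n r V"
  have k1: "1 \<le> k" and kn: "k \<le> n" and nk: "n - k = r" using assms(6,7) n3 unfolding k_def by auto
  have L: "L \<in> carrier_mat k k" unfolding L_def lower_block_def k_def by simp
  have Le: "L $$ (i,j) = V $$ (i+r, j+r)" if "i<k" "j<k" for i j
    using that unfolding L_def lower_block_def k_def by simp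
  have Ls: "L $$ (i,j) = L $$ (j,i)" if "i<k" "j<k" for i j
    using that Le Vs k_def by auto
  have Lo: "m \<le> L $$ (i,j) \<and> L $$ (i,j) \<le> M" if "i<k" "j<k" "i\<noteq>j" for i j
    using that Le Vo k_def by auto
  have Ld: "(\<Sum>j\<in>{0..<k}-{i}. L $$ (i,j)) + real (n-k) * m \<le> L $$ (i,i)" if i: "i<k" for i
  proof -
    have split: "{0..<n} - {i+r} = {0..<r} \<union> ((\<lambda>j. j+r) ` ({0..<k}-{i}))"
    proof (intro equalityI subsetI)
      fix x assume x: "x \<in> {0..<n} - {i+r}"
      show "x \<in> {0..<r} \<union> ((\<lambda>j. j+r) ` ({0..<k}-{i}))"
      proof (cases "x < r")
        case True then show ?thesis by simp
      next
        case False
        then have "x = (x - r) + r" "x - r \<in> {0..<k}-{i}" using x k_def by auto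
        then show ?thesis by (metis UnI2 imageI)
      qed
    next
      fix x assume "x \<in> {0..<r} \<union> ((\<lambda>j. j+r) ` ({0..<k}-{i}))"
      then show "x \<in> {0..<n} - {i+r}" using i k_def by auto
    qed
    have disj: "{0..<r} \<inter> ((\<lambda>j. j+r) ` ({0..<k}-{i})) = {}" by auto
    have "L $$ (i,i) = (\<Sum>j\<in>{0..<n} - {i+r}. V $$ (i+r,j))" using Le[OF i i] Vd[of "i+r"] i k_def by simp
    also have "\<dots> = (\<Sum>j\<in>{0..<r}. V $$ (i+r,j)) + (\<Sum>j\<in>(\<lambda>j. j+r) ` ({0..<k}-{i}). V $$ (i+r,j))"
      unfolding split by (rule sum.union_disjoint) (use disj in auto)
    also have "(\<Sum>j\<in>(\<lambda>j. j+r) ` ({0..<k}-{i}). V $$ (i+r,j)) = (\<Sum>j\<in>{0..<k}-{i}. V $$ (i+r,j+r))"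
      by (subst sum.reindex) (auto simp: inj_on_def)
    also have "\<dots> = (\<Sum>j\<in>{0..<k}-{i}. L $$ (i,j))" using i by (intro sum.cong refl) (auto simp: Le)
    finally have eq: "L $$ (i,i) = (\<Sum>j\<in>{0..<r}. V $$ (i+r,j)) + (\<Sum>j\<in>{0..<k}-{i}. L $$ (i,j))" .
    have "of_nat (card {0..<r}) * m \<le> (\<Sum>j\<in>{0..<r}. V $$ (i+r,j))"
      by (rule sum_bounded_below) (use Vo i k_def in auto)
    then show ?thesis using eq nk by simp
  qed
  have R2: "invertible_mat L \<and> max_norm (mat_inv L - inv_diag L) \<le> \<beta>"
    unfolding \<beta>_def by (rule main_gen[OF L k1 kn n3 m0 mM Ls Lo Ld])
  have n1: "real n - 1 > 0" and n2: "real n - 2 > 0" using n3 by auto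
  have "\<beta> = 2 * b^2 / (c * (real n - 1)^2) * (real n * b / (2 * (real n - 2) * c) + 1 / 2)"
    unfolding \<beta>_def m_def M_def using b0 c0 n1 n2 by (simp add: field_simps) (simp add: algebra_simps power2_eq_square)
  then show ?thesis using R1 R2 unfolding L_def by simp
qed

end
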